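(* Let $(\Omega,\mathcal{F},(\mathcal{F}_t)_{t\in[0,T]},P)$ be a filtered probability space, $T>0$, and let $(X_t)_{t\in[0,T]}$ be a continuous martingale whose initial value $X_0$ is a deterministic constant. Let $M_T=\max_{0\le s\le T}X_s$. Then $$E\left(M_T^2\right)+2X_0^2\le 4E\left(X_T^2\right).$$ *)

theory Defs
  imports "HOL-Probability.Probability"
begin

definition filtration_on :: "'a measure \<Rightarrow> real \<Rightarrow> (real \<Rightarrow> 'a measure) \<Rightarrow> bool" where
  "filtration_on M T F \<longleftrightarrow>
     (\<forall>t\<in>{0..T}. subalgebra M (F t)) \<and>
     (\<forall>s t. 0 \<le> s \<longrightarrow> s \<le> t \<longrightarrow> t \<le> T \<longrightarrow> sets (F s) \<subseteq> sets (F t))"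

definition martingale_on ::
  "'a measure \<Rightarrow> real \<Rightarrow> (real \<Rightarrow> 'a measure) \<Rightarrow> (real \<Rightarrow> 'a \<Rightarrow> real) \<Rightarrow> bool" where
  "martingale_on M T F X \<longleftrightarrow>
     filtration_on M T F \<and>
     (\<forall>t\<in>{0..T}. integrable M (X t) \<and> X t \<in> borel_measurable (F t)) \<and>
     (\<forall>s t. 0 \<le> s \<longrightarrow> s \<le> t \<longrightarrow> t \<le> T \<longrightarrow>
        (AE \<omega> in M. real_cond_exp M (F s) (X t) \<omega> = X s \<omega>))"

end

theory Submission
  imports Defs
begin

fun runmax :: "(nat \<Rightarrow> real) \<Rightarrow> nat \<Rightarrow> real" where
  "runmax y 0 = y 0"
| "runmax y (Suc k) = max (runmax y k) (y (Suc k))"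

lemma runmax_path:
  "(runmax y n)\<^sup>2 \<le> 2 * runmax y n * y n - (y 0)\<^sup>2 - 2 * (\<Sum>k<n. runmax y k * (y (Suc k) - y k))"
proof (induction n)
  case 0
  then show ?case by (simp add: power2_eq_square)
next
  case (Suc n)
  have key: "(runmax y (Suc n))\<^sup>2 - (runmax y n)\<^sup>2 \<le> 2 * y (Suc n) * (runmax y (Suc n) - runmax y n)"
  proof (cases "y (Suc n) \<le> runmax y n")
    case True then show ?thesis by (simp add: max_def)
  next
    case False
    then have "runmax y (Suc n) = y (Suc n)" by simp
    moreover have "0 \<le> (y (Suc n) - runmax y n)\<^sup>2" by simp
    ultimately show ?thesis by (simp add: power2_eq_square algebra_simps)
  qed
  show ?case using Suc key by (simp add: algebra_simps)
qed

lemma runmax_ex: "\<exists>j\<le>n. runmax y n = y j"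
  by (induction n) (auto simp: max_def intro: le_SucI)

lemma runmax_ge: "j \<le> n \<Longrightarrow> y j \<le> runmax y n"
  by (induction n) (auto simp: le_Suc_eq max_def)

lemma runmax_sq: "(runmax y n)\<^sup>2 \<le> (\<Sum>j\<le>n. (y j)\<^sup>2)"
proof -
  obtain j where "j \<le> n" "runmax y n = y j" using runmax_ex by blast
  then show ?thesis using member_le_sum[of j "{..n}" "\<lambda>j. (y j)\<^sup>2"] by auto
qed


lemma sq_int:
  assumes P: "prob_space M"
    and mart: "martingale_on M T F X"
    and iT: "integrable M (\<lambda>\<omega>. (X T \<omega>)\<^sup>2)"
    and t: "0 \<le> t" "t \<le> T"
  shows "integrable M (\<lambda>\<omega>. (X t \<omega>)\<^sup>2)"
proof -
  have filt: "filtration_on M T F" and intX: "\<And>t. t\<in>{0..T} \<Longrightarrow> integrable M (X t)"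
    and measX: "\<And>t. t\<in>{0..T} \<Longrightarrow> X t \<in> borel_measurable (F t)"
    and ce: "AE \<omega> in M. real_cond_exp M (F t) (X T) \<omega> = X t \<omega>"
    using mart t unfolding martingale_on_def by auto
  have sub: "subalgebra M (F t)" using filt t unfolding filtration_on_def by auto
  interpret prob_space M by (rule P)
  interpret finite_measure_subalgebra M "F t"
    by unfold_locales (rule sub)
  have mT: "X T \<in> borel_measurable M" using intX[of T] t by auto
  have mt: "X t \<in> borel_measurable M" using intX[of t] t by auto
  have J: "AE x in M. (real_cond_exp M (F t) (X T) x)\<^sup>2 \<le> real_cond_exp M (F t) (\<lambda>x. (X T x)\<^sup>2) x"
    by (rule real_cond_exp_jensens_inequality(2)[where I=UNIV and q="\<lambda>x. x\<^sup>2"])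
       (use intX[of T] t iT convex_power2 in auto)
  have ic: "integrable M (real_cond_exp M (F t) (\<lambda>x. (X T x)\<^sup>2))"
    using iT by (rule real_cond_exp_int(1))
  show ?thesis
  proof (rule Bochner_Integration.integrable_bound[OF ic])
    show "(\<lambda>\<omega>. (X t \<omega>)\<^sup>2) \<in> borel_measurable M" using mt by measurable
    show "AE x in M. norm ((X t x)\<^sup>2) \<le> norm (real_cond_exp M (F t) (\<lambda>x. (X T x)\<^sup>2) x)"
      using J ce by eventually_elim auto
  qed
qed


lemma int_prod:
  fixes f g :: "'a \<Rightarrow> real"
  assumes "integrable M (\<lambda>x. (f x)\<^sup>2)" "integrable M (\<lambda>x. (g x)\<^sup>2)"
    "f \<in> borel_measurable M" "g \<in> borel_measurable M"
  shows "integrable M (\<lambda>x. f x * g x)"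
proof (rule Bochner_Integration.integrable_bound[of M "\<lambda>x. (f x)\<^sup>2 + (g x)\<^sup>2"])
  show "integrable M (\<lambda>x. (f x)\<^sup>2 + (g x)\<^sup>2)" using assms by auto
  show "(\<lambda>x. f x * g x) \<in> borel_measurable M" using assms by measurable
  have "\<And>x. \<bar>f x * g x\<bar> \<le> (f x)\<^sup>2 + (g x)\<^sup>2"
  proof -
    fix x
    have "0 \<le> (\<bar>f x\<bar> - \<bar>g x\<bar>)\<^sup>2" by simp
    then have "2 * \<bar>f x\<bar> * \<bar>g x\<bar> \<le> (f x)\<^sup>2 + (g x)\<^sup>2"
      by (simp add: power2_eq_square algebra_simps)
    moreover have "0 \<le> \<bar>f x\<bar> * \<bar>g x\<bar>" by simp
    ultimately have "\<bar>f x\<bar> * \<bar>g x\<bar> \<le> (f x)\<^sup>2 + (g x)\<^sup>2" by linarith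
    then show "\<bar>f x * g x\<bar> \<le> (f x)\<^sup>2 + (g x)\<^sup>2" by (simp add: abs_mult)
  qed
  then show "AE x in M. norm (f x * g x) \<le> norm ((f x)\<^sup>2 + (g x)\<^sup>2)" by simp
qed

lemma meas_mono:
  assumes mart: "martingale_on M T F X" and "0 \<le> s" "s \<le> u" "u \<le> T"
    and "f \<in> borel_measurable (F s)"
  shows "f \<in> borel_measurable (F u)"
proof -
  have filt: "filtration_on M T F" using mart unfolding martingale_on_def by auto
  then have "subalgebra M (F s)" "subalgebra M (F u)" "sets (F s) \<subseteq> sets (F u)"
    using assms unfolding filtration_on_def by auto
  then have "subalgebra (F u) (F s)" unfolding subalgebra_def by auto
  then show ?thesis using measurable_from_subalg assms(5) by blast
qed

lemma disc:
  assumes P: "prob_space M"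
    and mart: "martingale_on M T F X"
    and iT: "integrable M (\<lambda>\<omega>. (X T \<omega>)\<^sup>2)"
    and x0: "\<forall>\<omega>\<in>space M. X 0 \<omega> = x0"
    and tr: "\<And>k. k \<le> n \<Longrightarrow> 0 \<le> t k \<and> t k \<le> T"
    and tm: "\<And>j k. j \<le> k \<Longrightarrow> k \<le> n \<Longrightarrow> t j \<le> t k"
    and t0: "t 0 = 0" and tn: "t n = T"
  shows "integrable M (\<lambda>\<omega>. (runmax (\<lambda>k. X (t k) \<omega>) n)\<^sup>2)"
    "(\<integral>\<omega>. (runmax (\<lambda>k. X (t k) \<omega>) n)\<^sup>2 \<partial>M) + 2 * x0\<^sup>2 \<le> 4 * (\<integral>\<omega>. (X T \<omega>)\<^sup>2 \<partial>M)"
proof -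
  interpret prob_space M by (rule P)
  define Y where "Y = (\<lambda>k \<omega>. X (t k) \<omega>)"
  define m where "m = (\<lambda>k \<omega>. runmax (\<lambda>j. Y j \<omega>) k)"
  have filt: "filtration_on M T F" and intX: "\<And>t. t\<in>{0..T} \<Longrightarrow> integrable M (X t)"
    and measX: "\<And>t. t\<in>{0..T} \<Longrightarrow> X t \<in> borel_measurable (F t)"
    and ce: "\<And>s t. 0 \<le> s \<Longrightarrow> s \<le> t \<Longrightarrow> t \<le> T \<Longrightarrow> AE \<omega> in M. real_cond_exp M (F s) (X t) \<omega> = X s \<omega>"
    using mart unfolding martingale_on_def by auto
  have subk: "\<And>k. k \<le> n \<Longrightarrow> subalgebra M (F (t k))" using filt tr unfolding filtration_on_def by auto
  have YM: "\<And>k. k \<le> n \<Longrightarrow> Y k \<in> borel_measurable M" unfolding Y_def using intX tr by auto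
  have Y2: "\<And>k. k \<le> n \<Longrightarrow> integrable M (\<lambda>\<omega>. (Y k \<omega>)\<^sup>2)" unfolding Y_def
    using sq_int[OF P mart iT] tr by auto
  have mF: "k \<le> n \<Longrightarrow> m k \<in> borel_measurable (F (t k))" for k
  proof (induction k)
    case 0
    then show ?case unfolding m_def Y_def using measX tr by (auto simp: fun_eq_iff)
  next
    case (Suc k)
    have a: "m k \<in> borel_measurable (F (t (Suc k)))"
      using meas_mono[OF mart _ _ _ Suc.IH] Suc.prems tr tm[of k "Suc k"] by auto
    have b: "Y (Suc k) \<in> borel_measurable (F (t (Suc k)))" unfolding Y_def using measX tr Suc.prems by auto
    have "m (Suc k) = (\<lambda>\<omega>. max (m k \<omega>) (Y (Suc k) \<omega>))" unfolding m_def by auto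
    then show ?case using a b by simp
  qed
  have mM: "k \<le> n \<Longrightarrow> m k \<in> borel_measurable M" for k
    using measurable_from_subalg[OF subk mF] by blast
  have m2: "k \<le> n \<Longrightarrow> integrable M (\<lambda>\<omega>. (m k \<omega>)\<^sup>2)" for k
  proof (rule Bochner_Integration.integrable_bound[of M "\<lambda>\<omega>. \<Sum>j\<le>k. (Y j \<omega>)\<^sup>2"])
    assume k: "k \<le> n"
    show "integrable M (\<lambda>\<omega>. \<Sum>j\<le>k. (Y j \<omega>)\<^sup>2)" using Y2 k by auto
    show "(\<lambda>\<omega>. (m k \<omega>)\<^sup>2) \<in> borel_measurable M" using mM[OF k] by measurable
    show "AE x in M. norm ((m k x)\<^sup>2) \<le> norm (\<Sum>j\<le>k. (Y j x)\<^sup>2)"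
    proof (intro AE_I2)
      fix x
      have "0 \<le> (\<Sum>j\<le>k. (Y j x)\<^sup>2)" by (auto intro: sum_nonneg)
      then show "norm ((m k x)\<^sup>2) \<le> norm (\<Sum>j\<le>k. (Y j x)\<^sup>2)"
        using runmax_sq[of "\<lambda>j. Y j x" k] unfolding m_def by simp
    qed
  qed
  have step: "k < n \<Longrightarrow> integrable M (\<lambda>\<omega>. m k \<omega> * (Y (Suc k) \<omega> - Y k \<omega>)) \<and>
      (\<integral>\<omega>. m k \<omega> * (Y (Suc k) \<omega> - Y k \<omega>) \<partial>M) = 0" for k
  proof -
    assume k: "k < n"
    interpret finite_measure_subalgebra M "F (t k)"
      by unfold_locales (rule subk, use k in simp)
    have i1: "integrable M (\<lambda>\<omega>. m k \<omega> * Y (Suc k) \<omega>)"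
      by (rule int_prod) (use m2 Y2 mM YM k in auto)
    have i2: "integrable M (\<lambda>\<omega>. m k \<omega> * Y k \<omega>)"
      by (rule int_prod) (use m2 Y2 mM YM k in auto)
    have "(\<integral>\<omega>. m k \<omega> * Y (Suc k) \<omega> \<partial>M) = (\<integral>\<omega>. m k \<omega> * real_cond_exp M (F (t k)) (Y (Suc k)) \<omega> \<partial>M)"
      by (rule real_cond_exp_intg(2)[symmetric]) (use i1 mF YM k in auto)
    also have "\<dots> = (\<integral>\<omega>. m k \<omega> * Y k \<omega> \<partial>M)"
    proof (rule integral_cong_AE)
      show "(\<lambda>\<omega>. m k \<omega> * real_cond_exp M (F (t k)) (Y (Suc k)) \<omega>) \<in> borel_measurable M"
        using mM[of k] k borel_measurable_cond_exp2 by (intro borel_measurable_times) auto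
      show "(\<lambda>\<omega>. m k \<omega> * Y k \<omega>) \<in> borel_measurable M" using mM[of k] YM[of k] k by (intro borel_measurable_times) auto
      have "AE \<omega> in M. real_cond_exp M (F (t k)) (Y (Suc k)) \<omega> = Y k \<omega>"
        unfolding Y_def using ce[of "t k" "t (Suc k)"] tr[of k] tr[of "Suc k"] tm[of k "Suc k"] k by auto
      then show "AE \<omega> in M. m k \<omega> * real_cond_exp M (F (t k)) (Y (Suc k)) \<omega> = m k \<omega> * Y k \<omega>"
        by eventually_elim simp
    qed
    finally have e: "(\<integral>\<omega>. m k \<omega> * Y (Suc k) \<omega> \<partial>M) = (\<integral>\<omega>. m k \<omega> * Y k \<omega> \<partial>M)" .
    have "(\<lambda>\<omega>. m k \<omega> * (Y (Suc k) \<omega> - Y k \<omega>)) = (\<lambda>\<omega>. m k \<omega> * Y (Suc k) \<omega> - m k \<omega> * Y k \<omega>)"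
      by (simp add: algebra_simps)
    then show ?thesis using i1 i2 e by simp
  qed
  define S where "S = (\<lambda>\<omega>. \<Sum>k<n. m k \<omega> * (Y (Suc k) \<omega> - Y k \<omega>))"
  have iS: "integrable M S" unfolding S_def using step by auto
  have S0: "integral\<^sup>L M S = 0" unfolding S_def
    using step by (simp add: Bochner_Integration.integral_sum)
  have pw: "(m n \<omega>)\<^sup>2 \<le> 4 * (Y n \<omega>)\<^sup>2 - 2 * x0\<^sup>2 - 4 * S \<omega>" if w: "\<omega> \<in> space M" for \<omega>
  proof -
    have a: "(m n \<omega>)\<^sup>2 \<le> 2 * m n \<omega> * Y n \<omega> - x0\<^sup>2 - 2 * S \<omega>"
      using runmax_path[of "\<lambda>j. Y j \<omega>" n] x0 w t0 unfolding m_def S_def Y_def by auto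
    have "0 \<le> (m n \<omega> - 2 * Y n \<omega>)\<^sup>2" by simp
    then have "2 * m n \<omega> * Y n \<omega> \<le> (m n \<omega>)\<^sup>2 / 2 + 2 * (Y n \<omega>)\<^sup>2"
      by (simp add: power2_eq_square algebra_simps)
    then show ?thesis using a by simp
  qed
  show mi: "integrable M (\<lambda>\<omega>. (runmax (\<lambda>k. X (t k) \<omega>) n)\<^sup>2)"
    using m2[of n] unfolding m_def Y_def by simp
  have "(\<integral>\<omega>. (m n \<omega>)\<^sup>2 \<partial>M) \<le> (\<integral>\<omega>. 4 * (Y n \<omega>)\<^sup>2 - 2 * x0\<^sup>2 - 4 * S \<omega> \<partial>M)"
    by (rule integral_mono) (use m2 Y2 iS pw in auto)
  also have "\<dots> = 4 * (\<integral>\<omega>. (Y n \<omega>)\<^sup>2 \<partial>M) - 2 * x0\<^sup>2"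
    using Y2[of n] iS S0 by (simp add: prob_space)
  finally show "(\<integral>\<omega>. (runmax (\<lambda>k. X (t k) \<omega>) n)\<^sup>2 \<partial>M) + 2 * x0\<^sup>2 \<le> 4 * (\<integral>\<omega>. (X T \<omega>)\<^sup>2 \<partial>M)"
    unfolding m_def Y_def tn by simp
qed


lemma grid_conv:
  fixes f :: "real \<Rightarrow> real"
  assumes T: "T > 0" and cf: "continuous_on {0..T} f"
  shows "(\<lambda>N. runmax (\<lambda>k. f (real k * T / real (Suc N))) (Suc N)) \<longlonglongrightarrow> (SUP s\<in>{0..T}. f s)"
proof -
  obtain s0 where s0: "s0 \<in> {0..T}" "\<And>y. y \<in> {0..T} \<Longrightarrow> f y \<le> f s0"
    using continuous_attains_sup[OF compact_Icc _ cf] T by auto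
  have bdd: "bdd_above (f ` {0..T})" using s0 by (intro bdd_aboveI2[where M="f s0"]) auto
  have S: "(SUP s\<in>{0..T}. f s) = f s0"
  proof (rule antisym)
    show "(SUP s\<in>{0..T}. f s) \<le> f s0" using s0 T by (intro cSUP_least) auto
    show "f s0 \<le> (SUP s\<in>{0..T}. f s)" using s0 bdd by (intro cSUP_upper) auto
  qed
  have gr: "real k * T / real (Suc N) \<in> {0..T}" if "k \<le> Suc N" for k N
  proof -
    have "real k * T / real (Suc N) \<le> real (Suc N) * T / real (Suc N)"
      using that T by (intro divide_right_mono mult_right_mono) auto
    then show ?thesis using T by auto
  qed
  show ?thesis unfolding S
  proof (rule LIMSEQ_I)
    fix r :: real assume r: "0 < r"
    obtain d where d: "d > 0" "\<And>x'. x' \<in> {0..T} \<Longrightarrow> dist x' s0 < d \<Longrightarrow> dist (f x') (f s0) < r"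
      using cf s0(1) r unfolding continuous_on_iff by metis
    obtain no :: nat where no: "T / d < real no" using reals_Archimedean2 by blast
    show "\<exists>no. \<forall>n\<ge>no. norm (runmax (\<lambda>k. f (real k * T / real (Suc n))) (Suc n) - f s0) < r"
    proof (intro exI allI impI)
      fix n assume n: "no \<le> n"
      define N where "N = real (Suc n)"
      have Npos: "N > 0" unfolding N_def by simp
      have "T / d < N" using no n unfolding N_def by linarith
      then have TN: "T / N < d" using d Npos T by (simp add: field_simps)
      define k where "k = nat \<lfloor>s0 * N / T\<rfloor>"
      have nn: "0 \<le> s0 * N / T" using s0 Npos T by auto
      have k1: "real k \<le> s0 * N / T" unfolding k_def using nn by linarith
      have k2: "s0 * N / T < real k + 1" unfolding k_def using nn by linarith
      have "s0 * N / T \<le> N" using s0 T Npos by (simp add: field_simps)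
      then have "real k \<le> real (Suc n)" using k1 unfolding N_def by linarith
      then have kle: "k \<le> Suc n" by simp
      have a: "real k * T / N \<le> s0" using k1 T Npos by (simp add: field_simps)
      have b: "s0 < real k * T / N + T / N" using k2 T Npos by (simp add: field_simps)
      have "dist (real k * T / N) s0 < d" using a b TN by (simp add: dist_real_def)
      then have "dist (f (real k * T / N)) (f s0) < r"
        using d(2) gr[OF kle] unfolding N_def by blast
      then have lo: "f s0 - r < f (real k * T / N)" by (simp add: dist_real_def)
      have "f (real k * T / N) \<le> runmax (\<lambda>k. f (real k * T / real (Suc n))) (Suc n)"
        using runmax_ge[OF kle, of "\<lambda>k. f (real k * T / real (Suc n))"] unfolding N_def by simp
      moreover have "runmax (\<lambda>k. f (real k * T / real (Suc n))) (Suc n) \<le> f s0"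
      proof -
        obtain j where "j \<le> Suc n" "runmax (\<lambda>k. f (real k * T / real (Suc n))) (Suc n) = f (real j * T / real (Suc n))"
          using runmax_ex by blast
        then show ?thesis using s0(2) gr by auto
      qed
      ultimately show "norm (runmax (\<lambda>k. f (real k * T / real (Suc n))) (Suc n) - f s0) < r"
        using lo by auto
    qed
  qed
qed


theorem mainTheorem5:
  fixes M :: "'a measure" and F :: "real \<Rightarrow> 'a measure"
    and X :: "real \<Rightarrow> 'a \<Rightarrow> real" and T x0 :: real
  assumes "prob_space M"
    and "T > 0"
    and "martingale_on M T F X"
    and "\<forall>\<omega>\<in>space M. continuous_on {0..T} (\<lambda>t. X t \<omega>)"
    and "\<forall>\<omega>\<in>space M. X 0 \<omega> = x0"
  shows "(\<integral>\<^sup>+ \<omega>. ennreal ((SUP s\<in>{0..T}. X s \<omega>)\<^sup>2) \<partial>M) + ennreal (2 * x0\<^sup>2)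
           \<le> 4 * (\<integral>\<^sup>+ \<omega>. ennreal ((X T \<omega>)\<^sup>2) \<partial>M)"
proof -
  note P = assms(1) and T = assms(2) and mart = assms(3) and cont = assms(4) and x0 = assms(5)
  interpret prob_space M by (rule P)
  have mT: "X T \<in> borel_measurable M" using mart T unfolding martingale_on_def by auto
  show ?thesis
  proof (cases "(\<integral>\<^sup>+ \<omega>. ennreal ((X T \<omega>)\<^sup>2) \<partial>M) = \<infinity>")
    case True
    then show ?thesis by (simp add: ennreal_mult_top)
  next
    case False
    have iT: "integrable M (\<lambda>\<omega>. (X T \<omega>)\<^sup>2)"
    proof (rule integrableI_bounded)
      show "(\<lambda>\<omega>. (X T \<omega>)\<^sup>2) \<in> borel_measurable M" using mT by measurable
      show "(\<integral>\<^sup>+ \<omega>. ennreal (norm ((X T \<omega>)\<^sup>2)) \<partial>M) < \<infinity>" using False by (simp add: top.not_eq_extremum)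
    qed
    define I where "I = (\<integral>\<omega>. (X T \<omega>)\<^sup>2 \<partial>M)"
    have nI: "(\<integral>\<^sup>+ \<omega>. ennreal ((X T \<omega>)\<^sup>2) \<partial>M) = ennreal I"
      unfolding I_def by (rule nn_integral_eq_integral) (use iT in auto)
    define r where "r = (\<lambda>N \<omega>. runmax (\<lambda>k. X (real k * T / real (Suc N)) \<omega>) (Suc N))"
    have D: "integrable M (\<lambda>\<omega>. (r N \<omega>)\<^sup>2) \<and> (\<integral>\<omega>. (r N \<omega>)\<^sup>2 \<partial>M) + 2 * x0\<^sup>2 \<le> 4 * I" for N
    proof -
      have gr: "real k * T / real (Suc N) \<in> {0..T}" if "k \<le> Suc N" for k
      proof -
        have "real k * T / real (Suc N) \<le> real (Suc N) * T / real (Suc N)"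
          using that T by (intro divide_right_mono mult_right_mono) auto
        then show ?thesis using T by auto
      qed
      have mono: "real j * T / real (Suc N) \<le> real k * T / real (Suc N)" if "j \<le> k" for j k
        using that T by (intro divide_right_mono mult_right_mono) auto
      show ?thesis
        using disc[OF P mart iT x0, of "Suc N" "\<lambda>k. real k * T / real (Suc N)"] gr mono
        unfolding r_def I_def by auto
    qed
    have c0: "0 \<le> 4 * I - 2 * x0\<^sup>2"
    proof -
      have "0 \<le> (\<integral>\<omega>. (r 0 \<omega>)\<^sup>2 \<partial>M)" by simp
      then show ?thesis using D[of 0] by linarith
    qed
    have bnd: "(\<integral>\<^sup>+ \<omega>. ennreal ((r N \<omega>)\<^sup>2) \<partial>M) \<le> ennreal (4 * I - 2 * x0\<^sup>2)" for N
    proof -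
      have "(\<integral>\<^sup>+ \<omega>. ennreal ((r N \<omega>)\<^sup>2) \<partial>M) = ennreal (\<integral>\<omega>. (r N \<omega>)\<^sup>2 \<partial>M)"
        by (rule nn_integral_eq_integral) (use D in auto)
      also have "\<dots> \<le> ennreal (4 * I - 2 * x0\<^sup>2)" using D[of N] by (intro ennreal_leI) linarith
      finally show ?thesis .
    qed
    have rM: "(\<lambda>\<omega>. ennreal ((r N \<omega>)\<^sup>2)) \<in> borel_measurable M" for N
      using D[of N] by auto
    have pw: "liminf (\<lambda>N. ennreal ((r N \<omega>)\<^sup>2)) = ennreal ((SUP s\<in>{0..T}. X s \<omega>)\<^sup>2)"
      if w: "\<omega> \<in> space M" for \<omega>
    proof (rule lim_imp_Liminf)
      show "sequentially \<noteq> bot" by simp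
      have "(\<lambda>N. r N \<omega>) \<longlonglongrightarrow> (SUP s\<in>{0..T}. X s \<omega>)"
        unfolding r_def by (rule grid_conv[OF T]) (use cont w in auto)
      then show "(\<lambda>N. ennreal ((r N \<omega>)\<^sup>2)) \<longlonglongrightarrow> ennreal ((SUP s\<in>{0..T}. X s \<omega>)\<^sup>2)"
        by (intro tendsto_ennrealI tendsto_power)
    qed
    have "(\<integral>\<^sup>+ \<omega>. ennreal ((SUP s\<in>{0..T}. X s \<omega>)\<^sup>2) \<partial>M)
        = (\<integral>\<^sup>+ \<omega>. liminf (\<lambda>N. ennreal ((r N \<omega>)\<^sup>2)) \<partial>M)"
      by (rule nn_integral_cong) (use pw in simp)
    also have "\<dots> \<le> liminf (\<lambda>N. \<integral>\<^sup>+ \<omega>. ennreal ((r N \<omega>)\<^sup>2) \<partial>M)"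
      by (rule nn_integral_liminf) (rule rM)
    also have "\<dots> \<le> limsup (\<lambda>N. \<integral>\<^sup>+ \<omega>. ennreal ((r N \<omega>)\<^sup>2) \<partial>M)"
      by (rule Liminf_le_Limsup) simp
    also have "\<dots> \<le> ennreal (4 * I - 2 * x0\<^sup>2)"
      by (rule Limsup_bounded) (use bnd in simp)
    finally have L: "(\<integral>\<^sup>+ \<omega>. ennreal ((SUP s\<in>{0..T}. X s \<omega>)\<^sup>2) \<partial>M) \<le> ennreal (4 * I - 2 * x0\<^sup>2)" .
    have "(\<integral>\<^sup>+ \<omega>. ennreal ((SUP s\<in>{0..T}. X s \<omega>)\<^sup>2) \<partial>M) + ennreal (2 * x0\<^sup>2)
        \<le> ennreal (4 * I - 2 * x0\<^sup>2) + ennreal (2 * x0\<^sup>2)"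
      using L by (rule add_right_mono)
    also have "\<dots> = ennreal (4 * I)" using c0 by (simp add: ennreal_plus[symmetric])
    also have "\<dots> = 4 * ennreal I" by (subst ennreal_mult') simp_all
    finally show ?thesis unfolding nI .
  qed
qed

end
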